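(* In the transductive setting, let $H$ be a hypothesis set bounded by $B$ and $L$ a uniformly $\beta$-cost-stable algorithm whose returned hypotheses lie in $H$. Let $h$ be the hypothesis returned by $L$ when trained on the random training set $S$ (with test set $T=X\setminus S$). Then for any $\delta>0$, with probability at least $1-\delta$ over the choice of $S$, $$R(h)\le\widehat R(h)+\beta+\Big(2\beta+\frac{B^2(m+u)}{mu}\Big)\sqrt{\frac{\alpha(m,u)\ln\frac1\delta}{2}},\qquad \alpha(m,u)=\frac{mu}{m+u-1/2}\cdot\frac{1}{1-1/(2\max\{m,u\})}.$$
   Context: Transductive setting: a fixed full sample $X=\{x_1,\dots,x_{m+u}\}$ of $m+u$ points, each with a real label $y(x)$. A training set $S\subset X$ of size $m$ is drawn uniformly at random without replacement, its labels are revealed, and $T=X\setminus S$ (of size $u$) is the test set. An algorithm $L$ maps $S$ (with labels) and $T$ to a hypothesis $h_S\colon X\to\mathbb{R}$. Loss: $c(h,x)=(h(x)-y(x))^2$. Training error $\widehat R(h)=\frac1m\sum_{x\in S}c(h,x)$, test error $R(h)=\frac1u\sum_{x\in T}c(h,x)$. Two training sets $S,S'$ differ in exactly one point if $S'=(S\setminus\{x\})\cup\{x'\}$ with $x\in S$, $x'\in X\setminus S$. $L$ is uniformly $\beta$-cost-stable if for all such pairs $S,S'$ and all $x\in X$, $|c(h_{S'},x)-c(h_S,x)|\le\beta$. A hypothesis set $H$ is bounded by $B>0$ if $|h(x)-y(x)|\le B$ for all $h\in H$, $x\in X$. *)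

theory Defs
  imports "HOL-Probability.Probability"
begin

definition cost :: "('a \<Rightarrow> real) \<Rightarrow> ('a \<Rightarrow> real) \<Rightarrow> 'a \<Rightarrow> real" where
  "cost y h x = (h x - y x)^2"

definition train_err :: "('a \<Rightarrow> real) \<Rightarrow> 'a set \<Rightarrow> ('a \<Rightarrow> real) \<Rightarrow> real" where
  "train_err y S h = (\<Sum>x\<in>S. cost y h x) / real (card S)"

definition test_err :: "('a \<Rightarrow> real) \<Rightarrow> 'a set \<Rightarrow> 'a set \<Rightarrow> ('a \<Rightarrow> real) \<Rightarrow> real" where
  "test_err y X S h = (\<Sum>x\<in>X - S. cost y h x) / real (card (X - S))"

definition train_sets :: "'a set \<Rightarrow> nat \<Rightarrow> 'a set set" where
  "train_sets X m = {S. S \<subseteq> X \<and> card S = m}"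

definition differ_one :: "'a set \<Rightarrow> 'a set \<Rightarrow> 'a set \<Rightarrow> bool" where
  "differ_one X S S' \<longleftrightarrow> (\<exists>x x'. x \<in> S \<and> x' \<in> X - S \<and> S' = (S - {x}) \<union> {x'})"

text \<open>Uniform beta-cost-stability of the algorithm L (labels are fixed, so L is a
  function of the training set S; the test set is X - S).\<close>
definition cost_stable ::
  "('a \<Rightarrow> real) \<Rightarrow> 'a set \<Rightarrow> nat \<Rightarrow> ('a set \<Rightarrow> 'a \<Rightarrow> real) \<Rightarrow> real \<Rightarrow> bool" where
  "cost_stable y X m L \<beta> \<longleftrightarrow>
     (\<forall>S\<in>train_sets X m. \<forall>S'. differ_one X S S' \<longrightarrow>
        (\<forall>x\<in>X. \<bar>cost y (L S') x - cost y (L S) x\<bar> \<le> \<beta>))"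

definition bounded_hyp :: "('a \<Rightarrow> real) \<Rightarrow> 'a set \<Rightarrow> ('a \<Rightarrow> real) set \<Rightarrow> real \<Rightarrow> bool" where
  "bounded_hyp y X H B \<longleftrightarrow> (\<forall>h\<in>H. \<forall>x\<in>X. \<bar>h x - y x\<bar> \<le> B)"

definition alpha :: "nat \<Rightarrow> nat \<Rightarrow> real" where
  "alpha m u = (real m * real u / (real m + real u - 1/2)) * (1 / (1 - 1 / (2 * real (max m u))))"

end

theory Submission
  imports Defs
begin


definition avg :: "'b set \<Rightarrow> ('b \<Rightarrow> real) \<Rightarrow> real" where
  "avg A f = (\<Sum>x\<in>A. f x) / real (card A)"

lemma TS_finite: "finite X \<Longrightarrow> finite (train_sets X k)"
  unfolding train_sets_def by (rule finite_subset[of _ "Pow X"]) auto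

lemma TS_card: "finite X \<Longrightarrow> card (train_sets X k) = card X choose k"
  unfolding train_sets_def by (rule n_subsets)

lemma TS_nonempty: "finite X \<Longrightarrow> k \<le> card X \<Longrightarrow> train_sets X k \<noteq> {}"
  by (metis (mono_tags, lifting) empty_iff mem_Collect_eq obtain_subset_with_card_n train_sets_def)

lemma sum_decomp:
  assumes X: "finite X"
  shows "(\<Sum>a\<in>X. \<Sum>S'\<in>train_sets (X - {a}) k. F (insert a S'))
       = real (Suc k) * (\<Sum>S\<in>train_sets X (Suc k). F S)"
proof -
  define A where "A = Sigma X (\<lambda>a. train_sets (X - {a}) k)"
  define B where "B = Sigma (train_sets X (Suc k)) (\<lambda>S. S)"
  have fin: "finite (train_sets (X - {a}) k)" for a using X by (simp add: TS_finite)
  have bij: "bij_betw (\<lambda>(a,S'). (insert a S', a)) A B"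
  proof (rule bij_betwI[where g = "\<lambda>(S,a). (a, S - {a})"])
    show "(\<lambda>(a,S'). (insert a S', a)) \<in> A \<rightarrow> B"
      using X by (auto simp: A_def B_def train_sets_def intro: finite_subset card_insert_disjoint)
    show "(\<lambda>(S,a). (a, S - {a})) \<in> B \<rightarrow> A"
      using X by (auto simp: A_def B_def train_sets_def)
    show "(\<lambda>(S,a). (a, S - {a})) ((\<lambda>(a,S'). (insert a S', a)) p) = p" if "p \<in> A" for p
      using that by (auto simp: A_def train_sets_def)
    show "(\<lambda>(a,S'). (insert a S', a)) ((\<lambda>(S,a). (a, S - {a})) q) = q" if "q \<in> B" for q
      using that by (auto simp: B_def)
  qed
  have "(\<Sum>a\<in>X. \<Sum>S'\<in>train_sets (X - {a}) k. F (insert a S')) = (\<Sum>p\<in>A. F (insert (fst p) (snd p)))"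
    unfolding A_def using X fin by (simp add: sum.Sigma split_beta)
  also have "\<dots> = (\<Sum>q\<in>B. F (fst q))"
    using sum.reindex_bij_betw[OF bij, of "\<lambda>q. F (fst q)"] by (simp add: split_beta)
  also have "\<dots> = (\<Sum>S\<in>train_sets X (Suc k). \<Sum>a\<in>S. F S)"
    unfolding B_def using X by (subst sum.Sigma) (auto simp: TS_finite train_sets_def split_beta intro: finite_subset)
  also have "\<dots> = (\<Sum>S\<in>train_sets X (Suc k). real (Suc k) * F S)"
    by (rule sum.cong) (auto simp: train_sets_def)
  finally show ?thesis by (simp add: sum_distrib_left)
qed


definition bd_diff :: "'a set \<Rightarrow> nat \<Rightarrow> ('a set \<Rightarrow> real) \<Rightarrow> real \<Rightarrow> bool" where
  "bd_diff X k f c \<longleftrightarrow> (\<forall>S\<in>train_sets X k. \<forall>S'. differ_one X S S' \<longrightarrow> \<bar>f S' - f S\<bar> \<le> c)"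

lemma TS_card': "finite X \<Longrightarrow> real (card (train_sets X k)) = real (card X choose k)"
  by (simp add: TS_card)

lemma avg_decomp:
  assumes X: "finite X" "X \<noteq> {}" and k: "Suc k \<le> card X"
  shows "avg (train_sets X (Suc k)) F = avg X (\<lambda>a. avg (train_sets (X - {a}) k) (\<lambda>S'. F (insert a S')))"
proof -
  define N where "N = card X"
  have cA: "card (train_sets (X - {a}) k) = (N - 1) choose k" if "a \<in> X" for a
    using X that by (simp add: TS_card N_def)
  have Kpos: "((N - 1) choose k) > 0" using k unfolding N_def by simp
  have c1: "real (Suc k) * real (card (train_sets X (Suc k))) = real N * real ((N - 1) choose k)"
  proof -
    have "real (Suc k) * (\<Sum>S\<in>train_sets X (Suc k). 1) = (\<Sum>a\<in>X. \<Sum>S'\<in>train_sets (X - {a}) k. (1::real))"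
      using sum_decomp[OF X(1), where k=k and F="\<lambda>_. 1::real"] by simp
    also have "\<dots> = (\<Sum>a\<in>X. real ((N - 1) choose k))"
      by (rule sum.cong) (auto simp: cA)
    finally show ?thesis by (simp add: N_def)
  qed
  have "avg X (\<lambda>a. avg (train_sets (X - {a}) k) (\<lambda>S'. F (insert a S')))
      = (\<Sum>a\<in>X. (\<Sum>S'\<in>train_sets (X - {a}) k. F (insert a S')) / real ((N - 1) choose k)) / real N"
    unfolding avg_def N_def by (intro arg_cong2[where f="(/)"] sum.cong) (auto simp: cA N_def)
  also have "\<dots> = (\<Sum>a\<in>X. \<Sum>S'\<in>train_sets (X - {a}) k. F (insert a S')) / (real ((N - 1) choose k) * real N)"
    by (simp add: sum_divide_distrib)
  also have "\<dots> = real (Suc k) * (\<Sum>S\<in>train_sets X (Suc k). F S) / (real (Suc k) * real (card (train_sets X (Suc k))))"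
  proof -
    have e1: "real ((N - 1) choose k) * real N = real (Suc k) * real (card (train_sets X (Suc k)))"
      using c1 by simp
    show ?thesis by (simp only: e1 sum_decomp[OF X(1)])
  qed
  also have "\<dots> = avg (train_sets X (Suc k)) F"
    unfolding avg_def by simp
  finally show ?thesis by simp
qed

lemma coupling:
  assumes X: "finite X" and ab: "a \<in> X" "b \<in> X" "a \<noteq> b" and k: "Suc k \<le> card X"
    and bd: "bd_diff X (Suc k) f c" and c: "c \<ge> 0"
  shows "avg (train_sets (X - {a}) k) (\<lambda>S. f (insert a S)) - avg (train_sets (X - {b}) k) (\<lambda>S. f (insert b S))
         \<le> c * real (card X - Suc k) / real (card X - 1)"
proof -
  define N where "N = card X"
  define A where "A = train_sets (X - {a}) k"
  define B where "B = train_sets (X - {b}) k"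
  define \<phi> where "\<phi> = (\<lambda>S. if b \<in> S then insert a (S - {b}) else S)"
  define \<psi> where "\<psi> = (\<lambda>S. if a \<in> S then insert b (S - {a}) else S)"
  have N2: "N \<ge> 2" using ab X unfolding N_def
    by (metis One_nat_def card_1_singletonE card_Diff1_le card_gt_0_iff empty_iff insertE le_antisym
        not_less_eq_eq numeral_2_eq_2 linorder_not_le)
  have finA: "finite A" and finB: "finite B" using X by (auto simp: A_def B_def TS_finite)
  have cardA: "card A = (N - 1) choose k" using X ab by (simp add: A_def TS_card N_def)
  have cardB: "card B = (N - 1) choose k" using X ab by (simp add: B_def TS_card N_def)
  have Kpos: "((N - 1) choose k) > 0" using k unfolding N_def by simp
  have bij: "bij_betw \<phi> A B"
  proof (rule bij_betwI[where g = \<psi>])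
    show "\<phi> \<in> A \<rightarrow> B"
    proof
      fix S assume S: "S \<in> A"
      hence fS: "finite S" using X by (auto simp: A_def train_sets_def intro: finite_subset)
      show "\<phi> S \<in> B"
      proof (cases "b \<in> S")
        case True
        have "a \<notin> S - {b}" using S by (auto simp: A_def train_sets_def)
        hence "card (insert a (S - {b})) = card S" using fS True
          by (simp add: card_Diff_singleton) (metis One_nat_def Suc_pred card_gt_0_iff empty_iff)
        then show ?thesis using S True ab by (auto simp: A_def B_def \<phi>_def train_sets_def)
      next
        case False
        then show ?thesis using S ab by (auto simp: A_def B_def \<phi>_def train_sets_def)
      qed
    qed
    show "\<psi> \<in> B \<rightarrow> A"
    proof
      fix S assume S: "S \<in> B"
      hence fS: "finite S" using X by (auto simp: B_def train_sets_def intro: finite_subset)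
      show "\<psi> S \<in> A"
      proof (cases "a \<in> S")
        case True
        have "b \<notin> S - {a}" using S by (auto simp: B_def train_sets_def)
        hence "card (insert b (S - {a})) = card S" using fS True
          by (simp add: card_Diff_singleton) (metis One_nat_def Suc_pred card_gt_0_iff empty_iff)
        then show ?thesis using S True ab by (auto simp: A_def B_def \<psi>_def train_sets_def)
      next
        case False
        then show ?thesis using S ab by (auto simp: A_def B_def \<psi>_def train_sets_def)
      qed
    qed
    show "\<psi> (\<phi> S) = S" if "S \<in> A" for S
      using that ab by (auto simp: A_def \<phi>_def \<psi>_def train_sets_def)
    show "\<phi> (\<psi> S) = S" if "S \<in> B" for S
      using that ab by (auto simp: B_def \<phi>_def \<psi>_def train_sets_def)
  qed
  have sB: "(\<Sum>S\<in>B. f (insert b S)) = (\<Sum>S\<in>A. f (insert b (\<phi> S)))"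
    using sum.reindex_bij_betw[OF bij, of "\<lambda>S. f (insert b S)"] by simp
  have trm: "f (insert a S) - f (insert b (\<phi> S)) \<le> (if b \<in> S then 0 else c)" if S: "S \<in> A" for S
  proof (cases "b \<in> S")
    case True
    hence "insert b (\<phi> S) = insert a S" by (auto simp: \<phi>_def)
    then show ?thesis using True by simp
  next
    case False
    have aS: "a \<notin> S" using S by (auto simp: A_def train_sets_def)
    have fS: "finite S" using S X by (auto simp: A_def train_sets_def intro: finite_subset)
    have in1: "insert a S \<in> train_sets X (Suc k)"
      using S aS fS ab by (auto simp: A_def train_sets_def)
    have d: "differ_one X (insert a S) (insert b S)"
      unfolding differ_one_def using False aS ab
      by (intro exI[of _ a] exI[of _ b]) auto
    have "\<bar>f (insert b S) - f (insert a S)\<bar> \<le> c"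
      using bd in1 d unfolding bd_diff_def by blast
    then show ?thesis using False by (simp add: \<phi>_def)
  qed
  have cnt: "(\<Sum>S\<in>A. (if b \<in> S then 0 else c)) = c * real ((N - 2) choose k)"
  proof -
    have "(\<Sum>S\<in>A. (if b \<in> S then 0 else c)) = (\<Sum>S\<in>{S\<in>A. b \<notin> S}. c)"
      using finA by (simp add: sum.If_cases Int_def)
    also have "{S\<in>A. b \<notin> S} = train_sets (X - {a} - {b}) k"
      by (auto simp: A_def train_sets_def)
    also have "card (X - {a} - {b}) = N - 2" using ab X by (simp add: N_def)
    hence "(\<Sum>S\<in>train_sets (X - {a} - {b}) k. c) = c * real ((N - 2) choose k)"
      using X by (simp add: TS_card)
    finally show ?thesis .
  qed
  have binom: "real (N - 1 - k) * real ((N - 1) choose k) = real (N - 1) * real ((N - 2) choose k)"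
    using binomial_absorb_comp[of "N - 1" k] by (metis diff_diff_left nat_1_add_1 of_nat_mult)
  have "avg A (\<lambda>S. f (insert a S)) - avg B (\<lambda>S. f (insert b S))
      = (\<Sum>S\<in>A. f (insert a S) - f (insert b (\<phi> S))) / real ((N - 1) choose k)"
    unfolding avg_def sB cardA cardB by (simp add: sum_subtractf diff_divide_distrib)
  also have "\<dots> \<le> (\<Sum>S\<in>A. (if b \<in> S then 0 else c)) / real ((N - 1) choose k)"
    by (intro divide_right_mono sum_mono trm) auto
  also have "\<dots> = c * real ((N - 2) choose k) / real ((N - 1) choose k)" by (simp add: cnt)
  also have "\<dots> = c * real (N - Suc k) / real (N - 1)"
  proof -
    have "real ((N - 2) choose k) = real (N - 1 - k) * real ((N - 1) choose k) / real (N - 1)"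
      using binom N2 by (simp add: field_simps)
    moreover have "N - 1 - k = N - Suc k" by simp
    ultimately show ?thesis using Kpos by simp
  qed
  finally show ?thesis unfolding A_def B_def N_def .
qed




lemma hoeffding_finite:
  fixes g :: "'b \<Rightarrow> real"
  assumes X: "finite X" "X \<noteq> {}" and l: "l > 0"
    and rng: "\<And>x. x \<in> X \<Longrightarrow> g x \<in> {a..b}"
  shows "avg X (\<lambda>x. exp (l * (g x - avg X g))) \<le> exp (l^2 * (b - a)^2 / 8)"
proof -
  interpret interval_bounded_random_variable "measure_pmf (pmf_of_set X)" g a b
  proof unfold_locales
    show "AE x in measure_pmf (pmf_of_set X). g x \<in> {a..b}" using X rng
      by (subst AE_measure_pmf_iff) auto
  qed simp
  have E: "measure_pmf.expectation (pmf_of_set X) g = avg X g"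
    unfolding avg_def using integral_pmf_of_set[OF X(2) X(1)] by simp
  have "nn_integral (measure_pmf (pmf_of_set X)) (\<lambda>x. exp (l * (g x - measure_pmf.expectation (pmf_of_set X) g))) \<le> ennreal (exp (l\<^sup>2 * (b - a)\<^sup>2 / 8))"
    by (rule Hoeffdings_lemma_nn_integral[OF l])
  moreover have "nn_integral (measure_pmf (pmf_of_set X)) (\<lambda>x. exp (l * (g x - measure_pmf.expectation (pmf_of_set X) g))) = ennreal (avg X (\<lambda>x. exp (l * (g x - avg X g))))"
  proof -
    have "nn_integral (measure_pmf (pmf_of_set X)) (\<lambda>x. exp (l * (g x - measure_pmf.expectation (pmf_of_set X) g))) = ennreal (integral\<^sup>L (measure_pmf (pmf_of_set X)) (\<lambda>x. exp (l * (g x - measure_pmf.expectation (pmf_of_set X) g))))"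
      using X by (intro nn_integral_eq_integral integrable_measure_pmf_finite) auto
    also have "integral\<^sup>L (measure_pmf (pmf_of_set X)) (\<lambda>x. exp (l * (g x - measure_pmf.expectation (pmf_of_set X) g))) = avg X (\<lambda>x. exp (l * (g x - avg X g)))"
      unfolding E unfolding avg_def using integral_pmf_of_set[OF X(2) X(1)] by simp
    finally show ?thesis .
  qed
  ultimately show ?thesis by simp
qed

definition Esum :: "nat \<Rightarrow> nat \<Rightarrow> real" where
  "Esum N k = (\<Sum>j\<in>{N - k..<N}. 1 / (real j)^2)"

lemma Esum_Suc: "Suc k \<le> N \<Longrightarrow> Esum N (Suc k) = 1 / (real (N - 1))^2 + Esum (N - 1) k"
proof -
  assume h: "Suc k \<le> N"
  have "{N - Suc k..<N} = insert (N - 1) {N - 1 - k..<N - 1}" using h by auto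
  moreover have "N - 1 \<notin> {N - 1 - k..<N - 1}" by simp
  ultimately show ?thesis unfolding Esum_def by simp
qed

lemma mgf:
  assumes "finite X" "k \<le> card X" "bd_diff X k f c" "c \<ge> 0" "l > 0"
  shows "avg (train_sets X k) (\<lambda>S. exp (l * (f S - avg (train_sets X k) f)))
         \<le> exp (l^2 * c^2 * (real (card X - k))^2 * Esum (card X) k / 8)"
  using assms
proof (induction k arbitrary: X f)
  case 0
  have "train_sets X 0 = {{}}" using 0 by (auto simp: train_sets_def) (metis card_0_eq empty_iff finite_subset)
  then show ?case by (simp add: avg_def Esum_def)
next
  case (Suc k)
  note X = Suc.prems(1) and kN = Suc.prems(2) and bd = Suc.prems(3) and c = Suc.prems(4) and l = Suc.prems(5)
  define N where "N = card X"
  have Xne: "X \<noteq> {}" using kN by auto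
  define g where "g = (\<lambda>a. avg (train_sets (X - {a}) k) (\<lambda>S. f (insert a S)))"
  define \<mu> where "\<mu> = avg (train_sets X (Suc k)) f"
  define Q where "Q = exp (l^2 * c^2 * (real (N - Suc k))^2 * Esum (N - 1) k / 8)"
  define w where "w = c * real (N - Suc k) / real (N - 1)"
  have mu: "\<mu> = avg X g" unfolding \<mu>_def g_def by (rule avg_decomp[OF X Xne kN])
  have IH: "avg (train_sets (X - {a}) k) (\<lambda>S. exp (l * (f (insert a S) - g a))) \<le> Q" if a: "a \<in> X" for a
  proof -
    have cX: "card (X - {a}) = N - 1" using a X by (simp add: N_def)
    have bda: "bd_diff (X - {a}) k (\<lambda>S. f (insert a S)) c"
      unfolding bd_diff_def
    proof (intro ballI allI impI)
      fix S S' assume S: "S \<in> train_sets (X - {a}) k" and d: "differ_one (X - {a}) S S'"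
      then obtain x x' where xx: "x \<in> S" "x' \<in> X - {a} - S" "S' = S - {x} \<union> {x'}"
        unfolding differ_one_def by blast
      have aS: "a \<notin> S" using S by (auto simp: train_sets_def)
      have fS: "finite S" using S X by (auto simp: train_sets_def intro: finite_subset)
      have in1: "insert a S \<in> train_sets X (Suc k)"
        using S aS fS a by (auto simp: train_sets_def)
      have "differ_one X (insert a S) (insert a S')"
        unfolding differ_one_def using xx aS
        by (intro exI[of _ x] exI[of _ x']) auto
      then show "\<bar>f (insert a S') - f (insert a S)\<bar> \<le> c" using bd in1 unfolding bd_diff_def by blast
    qed
    have "k \<le> card (X - {a})" using cX kN N_def by simp
    from Suc.IH[OF _ this bda c l] X cX
    show ?thesis unfolding g_def Q_def by (simp add: N_def)
  qed
  have split: "exp (l * (f (insert a S) - \<mu>)) = exp (l * (g a - \<mu>)) * exp (l * (f (insert a S) - g a))" for a S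
    by (simp add: exp_add[symmetric] algebra_simps)
  have "avg (train_sets X (Suc k)) (\<lambda>S. exp (l * (f S - \<mu>)))
      = avg X (\<lambda>a. avg (train_sets (X - {a}) k) (\<lambda>S. exp (l * (f (insert a S) - \<mu>))))"
    by (rule avg_decomp[OF X Xne kN])
  also have "\<dots> = avg X (\<lambda>a. exp (l * (g a - \<mu>)) * avg (train_sets (X - {a}) k) (\<lambda>S. exp (l * (f (insert a S) - g a))))"
    unfolding avg_def split by (simp add: sum_distrib_left)
  also have "\<dots> \<le> avg X (\<lambda>a. exp (l * (g a - \<mu>)) * Q)"
    unfolding avg_def[of X] by (intro divide_right_mono sum_mono mult_left_mono IH) auto
  also have "\<dots> = avg X (\<lambda>a. exp (l * (g a - avg X g))) * Q"
    unfolding avg_def mu by (simp add: sum_distrib_right)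
  also have "\<dots> \<le> exp (l^2 * w^2 / 8) * Q"
  proof (rule mult_right_mono)
    show "0 \<le> Q" unfolding Q_def by simp
    define m0 where "m0 = Min (g ` X)"
    have fin: "finite (g ` X)" using X by simp
    have "m0 \<in> g ` X" unfolding m0_def using fin Xne by simp
    then obtain b where b: "b \<in> X" "g b = m0" by auto
    have rng: "g a \<in> {m0..m0 + w}" if a: "a \<in> X" for a
      unfolding atLeastAtMost_iff
    proof
      show "m0 \<le> g a" unfolding m0_def using fin a by simp
      show "g a \<le> m0 + w"
      proof (cases "a = b")
        case True then show ?thesis using b c by (simp add: w_def)
      next
        case False
        have "g a - g b \<le> w" unfolding g_def w_def N_def
          by (rule coupling[OF X a b(1) False kN bd c])
        then show ?thesis using b by simp
      qed
    qed
    show "avg X (\<lambda>a. exp (l * (g a - avg X g))) \<le> exp (l^2 * w^2 / 8)"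
      using hoeffding_finite[OF X Xne l rng] by simp
  qed
  also have "\<dots> = exp (l^2 * c^2 * (real (N - Suc k))^2 * Esum N (Suc k) / 8)"
    unfolding Q_def w_def Esum_Suc[OF kN[folded N_def]] by (simp add: exp_add[symmetric] field_simps power2_eq_square)
  finally show ?case unfolding \<mu>_def N_def .
qed




lemma tail:
  assumes X: "finite X" and k: "k \<le> card X" and bd: "bd_diff X k f c" and c: "c \<ge> 0"
    and e: "\<epsilon> > 0" and V: "V = c^2 * (real (card X - k))^2 * Esum (card X) k" "V > 0"
  shows "real (card {S\<in>train_sets X k. f S - avg (train_sets X k) f \<ge> \<epsilon>})
         \<le> exp (- 2 * \<epsilon>^2 / V) * real (card (train_sets X k))"
proof -
  define T where "T = train_sets X k"
  define \<mu> where "\<mu> = avg T f"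
  define l where "l = 4 * \<epsilon> / V"
  have l: "l > 0" unfolding l_def using e V by simp
  have finT: "finite T" unfolding T_def using X by (simp add: TS_finite)
  have Tne: "T \<noteq> {}" unfolding T_def using TS_nonempty[OF X k] .
  have cT: "real (card T) > 0" using finT Tne by (simp add: card_gt_0_iff)
  have m: "avg T (\<lambda>S. exp (l * (f S - \<mu>))) \<le> exp (l^2 * V / 8)"
    using mgf[OF X k bd c l] unfolding T_def \<mu>_def V(1) by (simp add: mult.assoc)
  have "real (card {S\<in>T. f S - \<mu> \<ge> \<epsilon>}) = (\<Sum>S\<in>{S\<in>T. f S - \<mu> \<ge> \<epsilon>}. 1)" by simp
  also have "\<dots> \<le> (\<Sum>S\<in>{S\<in>T. f S - \<mu> \<ge> \<epsilon>}. exp (l * (f S - \<mu>)) * exp (- l * \<epsilon>))"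
  proof (rule sum_mono)
    fix S assume "S \<in> {S\<in>T. f S - \<mu> \<ge> \<epsilon>}"
    hence "l * \<epsilon> \<le> l * (f S - \<mu>)" using l by (intro mult_left_mono) auto
    hence "0 \<le> l * (f S - \<mu>) + - l * \<epsilon>" by simp
    hence "1 \<le> exp (l * (f S - \<mu>) + - l * \<epsilon>)" by (simp only: one_le_exp_iff)
    thus "1 \<le> exp (l * (f S - \<mu>)) * exp (- l * \<epsilon>)" by (simp only: mult_exp_exp)
  qed
  also have "\<dots> \<le> (\<Sum>S\<in>T. exp (l * (f S - \<mu>)) * exp (- l * \<epsilon>))"
    by (rule sum_mono2[OF finT]) auto
  also have "\<dots> = (\<Sum>S\<in>T. exp (l * (f S - \<mu>))) * exp (- l * \<epsilon>)"
    by (rule sum_distrib_right[symmetric])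
  also have "\<dots> = avg T (\<lambda>S. exp (l * (f S - \<mu>))) * real (card T) * exp (- l * \<epsilon>)"
    unfolding avg_def using cT by simp
  also have "\<dots> \<le> exp (l^2 * V / 8) * real (card T) * exp (- l * \<epsilon>)"
    by (intro mult_right_mono m) auto
  also have "\<dots> = exp (l^2 * V / 8 - l * \<epsilon>) * real (card T)"
  proof -
    have "exp (l^2 * V / 8 - l * \<epsilon>) = exp (l^2 * V / 8) * exp (- l * \<epsilon>)"
      by (simp add: exp_add[symmetric])
    thus ?thesis by (simp only: mult_ac)
  qed
  also have "l^2 * V / 8 - l * \<epsilon> = - 2 * \<epsilon>^2 / V"
    unfolding l_def using V by (simp add: field_simps power2_eq_square)
  finally show ?thesis unfolding T_def \<mu>_def .
qed

lemma sum_inv_sq_le: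
  assumes "1 \<le> a" "a \<le> b"
  shows "(\<Sum>j\<in>{a..<b}. 1 / (real j)^2) \<le> 1 / (real a - 1/2) - 1 / (real b - 1/2)"
  using assms(2)
proof (induction b)
  case 0 then show ?case by simp
next
  case (Suc b)
  show ?case
  proof (cases "a = Suc b")
    case True then show ?thesis by simp
  next
    case False
    hence ab: "a \<le> b" using Suc.prems by simp
    have b1: "real b \<ge> 1" using ab assms(1) by simp
    have s: "(\<Sum>j\<in>{a..<Suc b}. 1 / (real j)^2) = (\<Sum>j\<in>{a..<b}. 1 / (real j)^2) + 1 / (real b)^2"
      using ab by simp
    have i1: "(\<Sum>j\<in>{a..<b}. 1 / (real j)^2) \<le> 1 / (real a - 1/2) - 1 / (real b - 1/2)"
      using Suc.IH[OF ab] by simp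
    have i2: "1 / (real b)^2 \<le> 1 / (real b - 1/2) - 1 / (real b + 1/2)"
    proof -
      have e: "1 / (real b - 1/2) - 1 / (real b + 1/2) = 1 / ((real b)^2 - 1/4)"
        using b1 by (simp add: field_simps power2_eq_square)
      have "(real b)^2 \<ge> 1" using b1 by simp
      hence p: "(real b)^2 - 1/4 > 0" by simp
      hence "1 / (real b)^2 \<le> 1 / ((real b)^2 - 1/4)"
        by (intro divide_left_mono mult_pos_pos) (use b1 in auto)
      thus ?thesis using e by simp
    qed
    have e: "real (Suc b) - 1/2 = real b + 1/2" by simp
    show ?thesis unfolding e using s i1 i2 by linarith
  qed
qed

lemma Esum_le:
  assumes "k < N"
  shows "Esum N k \<le> real k / ((real (N - k) - 1/2) * (real N - 1/2))"
proof -
  have "Esum N k \<le> 1 / (real (N - k) - 1/2) - 1 / (real N - 1/2)"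
    unfolding Esum_def using assms by (intro sum_inv_sq_le) auto
  also have "\<dots> = real k / ((real (N - k) - 1/2) * (real N - 1/2))"
    using assms by (simp add: of_nat_diff field_simps)
  finally show ?thesis .
qed

lemma Esum_pos:
  assumes "1 \<le> k" "k < N"
  shows "Esum N k > 0"
  unfolding Esum_def
proof (rule sum_pos)
  show "finite {N - k..<N}" by simp
  show "{N - k..<N} \<noteq> {}" using assms by simp
  show "0 < 1 / (real i)^2" if "i \<in> {N - k..<N}" for i using that assms by auto
qed

lemma tail_gen:
  assumes X: "finite X" and N: "card X = N" and k: "1 \<le> k" "k < N" and bd: "bd_diff X k f c" and c: "c > 0"
    and e: "\<epsilon> > 0"
  shows "real (card {S\<in>train_sets X k. f S - avg (train_sets X k) f \<ge> \<epsilon>})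
         \<le> exp (- 2 * \<epsilon>^2 / (c^2 * (real k * (real (N - k))^2 / ((real (N - k) - 1/2) * (real N - 1/2)))))
           * real (card (train_sets X k))"
proof -
  define V where "V = c^2 * (real (card X - k))^2 * Esum (card X) k"
  define W where "W = c^2 * (real k * (real (N - k))^2 / ((real (N - k) - 1/2) * (real N - 1/2)))"
  have Nk: "real (N - k) \<ge> 1" using k by simp
  have Vpos: "V > 0" unfolding V_def using c k N Esum_pos[OF k] by simp
  have VW: "V \<le> W"
  proof -
    have "V = c^2 * (real (N - k))^2 * Esum N k" unfolding V_def N ..
    also have "\<dots> \<le> c^2 * (real (N - k))^2 * (real k / ((real (N - k) - 1/2) * (real N - 1/2)))"
      by (intro mult_left_mono Esum_le k) auto
    also have "\<dots> = W" unfolding W_def by simp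
    finally show ?thesis .
  qed
  have "real (card {S\<in>train_sets X k. f S - avg (train_sets X k) f \<ge> \<epsilon>}) \<le> exp (- 2 * \<epsilon>^2 / V) * real (card (train_sets X k))"
    by (rule tail[OF X _ bd _ e V_def Vpos]) (use k N c in auto)
  also have "\<dots> \<le> exp (- 2 * \<epsilon>^2 / W) * real (card (train_sets X k))"
  proof (rule mult_right_mono)
    have "2 * \<epsilon>^2 / W \<le> 2 * \<epsilon>^2 / V"
      by (intro divide_left_mono VW) (use Vpos VW in auto)
    hence "-(2 * \<epsilon>^2 / V) \<le> -(2 * \<epsilon>^2 / W)" by simp
    hence "exp (-(2 * \<epsilon>^2 / V)) \<le> exp (-(2 * \<epsilon>^2 / W))" by simp
    thus "exp (- 2 * \<epsilon>^2 / V) \<le> exp (- 2 * \<epsilon>^2 / W)" by simp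
  qed auto
  finally show ?thesis unfolding W_def .
qed




lemma sum_Sigma_prod:
  assumes "finite I" "\<And>i. i \<in> I \<Longrightarrow> finite (P i)" "\<And>i. i \<in> I \<Longrightarrow> finite (Q i)"
  shows "(\<Sum>p\<in>Sigma I (\<lambda>i. P i \<times> Q i). g p) = (\<Sum>i\<in>I. \<Sum>x\<in>P i. \<Sum>z\<in>Q i. g (i, x, z))"
proof -
  have "(\<Sum>p\<in>Sigma I (\<lambda>i. P i \<times> Q i). g p) = (\<Sum>i\<in>I. \<Sum>xz\<in>P i \<times> Q i. g (i, xz))"
    using assms by (subst sum.Sigma) auto
  also have "\<dots> = (\<Sum>i\<in>I. \<Sum>x\<in>P i. \<Sum>z\<in>Q i. g (i, x, z))"
    using assms by (intro sum.cong refl) (simp add: sum.cartesian_product split_beta)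
  finally show ?thesis .
qed

lemma expect_bound:
  fixes cst :: "'a set \<Rightarrow> 'a \<Rightarrow> real"
  assumes X: "finite X" "card X = m + u" and mu: "m \<ge> 1" "u \<ge> 1"
    and stab: "\<And>S x0 x z. S \<in> train_sets X m \<Longrightarrow> x0 \<in> S \<Longrightarrow> x \<in> X - S \<Longrightarrow> z \<in> X \<Longrightarrow>
                 cst S z \<le> cst (insert x (S - {x0})) z + \<beta>"
  shows "avg (train_sets X m) (\<lambda>S. (\<Sum>x\<in>X - S. cst S x) / real u - (\<Sum>x\<in>S. cst S x) / real m) \<le> \<beta>"
proof -
  define TS where "TS = train_sets X m"
  define A where "A = Sigma TS (\<lambda>S. (X - S) \<times> S)"
  define B where "B = Sigma TS (\<lambda>S. S \<times> (X - S))"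
  define sw where "sw = (\<lambda>(S::'a set, x::'a, x0::'a). (insert x (S - {x0}), x, x0))"
  define sw' where "sw' = (\<lambda>(S::'a set, x::'a, x0::'a). (insert x0 (S - {x}), x, x0))"
  have finTS: "finite TS" unfolding TS_def using X by (simp add: TS_finite)
  have TSne: "TS \<noteq> {}" unfolding TS_def using X by (intro TS_nonempty) auto
  have finS: "finite S" if "S \<in> TS" for S using that X by (auto simp: TS_def train_sets_def intro: finite_subset)
  have cS: "card S = m" if "S \<in> TS" for S using that by (auto simp: TS_def train_sets_def)
  have cXS: "card (X - S) = u" if S: "S \<in> TS" for S
  proof -
    have "S \<subseteq> X" using S by (auto simp: TS_def train_sets_def)
    hence "card (X - S) = card X - card S" by (rule card_Diff_subset[OF finS[OF S]])
    thus ?thesis using X cS[OF S] by simp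
  qed
  have bij: "bij_betw sw A B"
  proof (rule bij_betwI[where g = sw'])
    show "sw \<in> A \<rightarrow> B"
    proof (clarsimp simp: A_def B_def sw_def)
      fix S x x0 assume S: "S \<in> TS" and x: "x \<in> X" "x \<notin> S" and x0: "x0 \<in> S"
      have "card (insert x (S - {x0})) = m"
        using S x x0 finS[OF S] cS[OF S] mu by (simp add: card_Diff_singleton)
      moreover have "S \<subseteq> X" using S by (auto simp: TS_def train_sets_def)
      ultimately show "insert x (S - {x0}) \<in> TS \<and> x0 \<in> X \<and> x0 \<noteq> x"
        using x x0 by (auto simp: TS_def train_sets_def)
    qed
    show "sw' \<in> B \<rightarrow> A"
    proof (clarsimp simp: A_def B_def sw'_def)
      fix S x x0 assume S: "S \<in> TS" and x: "x \<in> S" and x0: "x0 \<in> X" "x0 \<notin> S"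
      have "card (insert x0 (S - {x})) = m"
        using S x x0 finS[OF S] cS[OF S] mu by (simp add: card_Diff_singleton)
      moreover have "S \<subseteq> X" using S by (auto simp: TS_def train_sets_def)
      ultimately show "insert x0 (S - {x}) \<in> TS \<and> x \<in> X \<and> x \<noteq> x0"
        using x x0 by (auto simp: TS_def train_sets_def)
    qed
    show "sw' (sw p) = p" if "p \<in> A" for p
      using that by (auto simp: A_def sw_def sw'_def)
    show "sw (sw' q) = q" if "q \<in> B" for q
      using that by (auto simp: B_def sw_def sw'_def)
  qed
  have L1: "(\<Sum>p\<in>A. cst (fst p) (fst (snd p))) = real m * (\<Sum>S\<in>TS. \<Sum>x\<in>X - S. cst S x)"
  proof -
    have "(\<Sum>p\<in>A. cst (fst p) (fst (snd p))) = (\<Sum>S\<in>TS. \<Sum>x\<in>X - S. \<Sum>z\<in>S. cst S x)"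
      unfolding A_def using finTS finS X by (subst sum_Sigma_prod) auto
    also have "\<dots> = (\<Sum>S\<in>TS. real m * (\<Sum>x\<in>X - S. cst S x))"
      by (intro sum.cong refl) (simp add: cS sum_distrib_left)
    finally show ?thesis by (simp add: sum_distrib_left)
  qed
  have L2: "(\<Sum>p\<in>A. cst (fst p) (fst (snd p))) \<le> (\<Sum>q\<in>B. cst (fst q) (fst (snd q)) + \<beta>)"
  proof -
    have "(\<Sum>p\<in>A. cst (fst p) (fst (snd p))) \<le> (\<Sum>p\<in>A. cst (fst (sw p)) (fst (snd (sw p))) + \<beta>)"
    proof (rule sum_mono)
      fix p assume "p \<in> A"
      then obtain S x x0 where p: "p = (S, x, x0)" "S \<in> TS" "x \<in> X - S" "x0 \<in> S"
        unfolding A_def by auto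
      show "cst (fst p) (fst (snd p)) \<le> cst (fst (sw p)) (fst (snd (sw p))) + \<beta>"
        using stab[of S x0 x x] p by (simp add: sw_def TS_def)
    qed
    also have "\<dots> = (\<Sum>q\<in>B. cst (fst q) (fst (snd q)) + \<beta>)"
      using sum.reindex_bij_betw[OF bij, of "\<lambda>q. cst (fst q) (fst (snd q)) + \<beta>"] by simp
    finally show ?thesis .
  qed
  have L3: "(\<Sum>q\<in>B. cst (fst q) (fst (snd q)) + \<beta>)
            = real u * (\<Sum>S\<in>TS. \<Sum>x\<in>S. cst S x) + real u * real m * \<beta> * real (card TS)"
  proof -
    have "(\<Sum>q\<in>B. cst (fst q) (fst (snd q)) + \<beta>) = (\<Sum>S\<in>TS. \<Sum>x\<in>S. \<Sum>z\<in>X - S. cst S x + \<beta>)"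
      unfolding B_def using finTS finS X by (subst sum_Sigma_prod) auto
    also have "\<dots> = (\<Sum>S\<in>TS. real u * (\<Sum>x\<in>S. cst S x) + real u * real m * \<beta>)"
      by (intro sum.cong refl) (simp add: cS cXS sum_distrib_left distrib_left sum.distrib)
    finally show ?thesis by (simp add: sum.distrib sum_distrib_left)
  qed
  have key: "real m * (\<Sum>S\<in>TS. \<Sum>x\<in>X - S. cst S x)
            \<le> real u * (\<Sum>S\<in>TS. \<Sum>x\<in>S. cst S x) + real u * real m * \<beta> * real (card TS)"
    using L1 L2 L3 by linarith
  have cT: "real (card TS) > 0" using finTS TSne by (simp add: card_gt_0_iff)
  have m0: "real m > 0" "real u > 0" using mu by auto
  have "avg TS (\<lambda>S. (\<Sum>x\<in>X - S. cst S x) / real u - (\<Sum>x\<in>S. cst S x) / real m)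
       = ((\<Sum>S\<in>TS. \<Sum>x\<in>X - S. cst S x) / real u - (\<Sum>S\<in>TS. \<Sum>x\<in>S. cst S x) / real m) / real (card TS)"
    unfolding avg_def by (simp add: sum_subtractf sum_divide_distrib)
  also have "\<dots> \<le> \<beta>"
  proof -
    have "(\<Sum>S\<in>TS. \<Sum>x\<in>X - S. cst S x) / real u - (\<Sum>S\<in>TS. \<Sum>x\<in>S. cst S x) / real m \<le> \<beta> * real (card TS)"
      using key m0 by (simp add: field_simps)
    thus ?thesis using cT by (simp add: divide_le_eq)
  qed
  finally show ?thesis unfolding TS_def .
qed

lemma swap_avg:
  assumes A: "finite A" and pq: "p \<notin> A" "q \<notin> A"
    and F: "\<And>z. z \<in> A \<Longrightarrow> \<bar>F z - G z\<bar> \<le> b" and b: "b \<ge> 0"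
    and D: "0 \<le> F p" "F p \<le> D" "0 \<le> G q" "G q \<le> D"
  shows "\<bar>sum F (insert p A) / real (Suc (card A)) - sum G (insert q A) / real (Suc (card A))\<bar>
         \<le> b + D / real (Suc (card A))"
proof -
  define n where "n = real (Suc (card A))"
  have n: "n > 0" unfolding n_def by simp
  have "sum F (insert p A) - sum G (insert q A) = (\<Sum>z\<in>A. F z - G z) + (F p - G q)"
    using A pq by (simp add: sum_subtractf)
  moreover have "\<bar>\<Sum>z\<in>A. F z - G z\<bar> \<le> real (card A) * b"
  proof -
    have "\<bar>\<Sum>z\<in>A. F z - G z\<bar> \<le> (\<Sum>z\<in>A. \<bar>F z - G z\<bar>)" by (rule sum_abs)
    also have "\<dots> \<le> (\<Sum>z\<in>A. b)" by (intro sum_mono F)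
    finally show ?thesis by simp
  qed
  moreover have "\<bar>F p - G q\<bar> \<le> D" using D by auto
  ultimately have "\<bar>sum F (insert p A) - sum G (insert q A)\<bar> \<le> real (card A) * b + D" by linarith
  also have "\<dots> \<le> n * b + D" unfolding n_def using b by (intro add_right_mono mult_right_mono) auto
  finally have h: "\<bar>sum F (insert p A) - sum G (insert q A)\<bar> \<le> n * b + D" .
  have "\<bar>sum F (insert p A) / n - sum G (insert q A) / n\<bar> = \<bar>sum F (insert p A) - sum G (insert q A)\<bar> / n"
    using n by (simp add: diff_divide_distrib[symmetric])
  also have "\<dots> \<le> (n * b + D) / n" using n h by (intro divide_right_mono) auto
  also have "\<dots> = b + D / n" using n by (simp add: field_simps)
  finally show ?thesis unfolding n_def .
qed




lemma alpha_eq1: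
  assumes "m \<le> u" "1 \<le> m"
  shows "alpha m u = real m * (real u)^2 / ((real u - 1/2) * (real (m + u) - 1/2))"
proof -
  have mx: "max m u = u" using assms by simp
  have u: "real u \<ge> 1" using assms by simp
  have m: "real m \<ge> 1" using assms by simp
  have d1: "real m + real u - 1/2 \<noteq> 0" using u m by simp
  have d2: "2 * real u - 1 \<noteq> 0" using u by simp
  have "1 - 1 / (2 * real u) = (2 * real u - 1) / (2 * real u)" using u by (simp add: field_simps)
  hence e: "1 / (1 - 1 / (2 * real u)) = 2 * real u / (2 * real u - 1)" using u d2 by simp
  show ?thesis unfolding alpha_def mx e using d1 d2 u m by (simp add: field_simps power2_eq_square)
qed

lemma alpha_eq2:
  assumes "u < m" "1 \<le> u"
  shows "alpha m u = real u * (real m)^2 / ((real m - 1/2) * (real (u + m) - 1/2))"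
proof -
  have mx: "max m u = m" using assms by simp
  have u: "real u \<ge> 1" using assms by simp
  have m: "real m \<ge> 1" using assms by simp
  have d1: "real m + real u - 1/2 \<noteq> 0" using u m by simp
  have d2: "2 * real m - 1 \<noteq> 0" using m by simp
  have "1 - 1 / (2 * real m) = (2 * real m - 1) / (2 * real m)" using m by (simp add: field_simps)
  hence e: "1 / (1 - 1 / (2 * real m)) = 2 * real m / (2 * real m - 1)" using m d2 by simp
  show ?thesis unfolding alpha_def mx e using d1 d2 u m by (simp add: field_simps power2_eq_square)
qed


lemma compl_bij:
  assumes X: "finite X" "card X = m + u"
  shows "bij_betw (\<lambda>T. X - T) (train_sets X u) (train_sets X m)"
proof (rule bij_betwI[where g = "\<lambda>T. X - T"])
  show "(\<lambda>T. X - T) \<in> train_sets X u \<rightarrow> train_sets X m"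
  proof
    fix T assume "T \<in> train_sets X u"
    hence T: "T \<subseteq> X" "card T = u" by (auto simp: train_sets_def)
    hence "card (X - T) = card X - card T" using X by (intro card_Diff_subset) (auto intro: finite_subset)
    thus "X - T \<in> train_sets X m" using T X by (simp add: train_sets_def)
  qed
  show "(\<lambda>T. X - T) \<in> train_sets X m \<rightarrow> train_sets X u"
  proof
    fix T assume "T \<in> train_sets X m"
    hence T: "T \<subseteq> X" "card T = m" by (auto simp: train_sets_def)
    hence "card (X - T) = card X - card T" using X by (intro card_Diff_subset) (auto intro: finite_subset)
    thus "X - T \<in> train_sets X u" using T X by (simp add: train_sets_def)
  qed
qed (auto simp: train_sets_def)

theorem theorem8:
  fixes X :: "'a set" and y :: "'a \<Rightarrow> real" and m u :: nat
    and H :: "('a \<Rightarrow> real) set" and B \<beta> \<delta> :: real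
    and L :: "'a set \<Rightarrow> 'a \<Rightarrow> real"
  assumes "finite X" and "card X = m + u" and "m \<ge> 1" and "u \<ge> 1"
    and "B > 0" and "bounded_hyp y X H B"
    and "\<And>S. S \<in> train_sets X m \<Longrightarrow> L S \<in> H"
    and "cost_stable y X m L \<beta>"
    and "\<delta> > 0"
  shows "measure_pmf.prob (pmf_of_set (train_sets X m))
           {S. test_err y X S (L S) \<le> train_err y S (L S) + \<beta>
                + (2 * \<beta> + B^2 * (real m + real u) / (real m * real u))
                  * sqrt (alpha m u * ln (1 / \<delta>) / 2)}
         \<ge> 1 - \<delta>"
proof (cases "\<delta> \<ge> 1")
  case True
  then show ?thesis by (meson diff_le_0_iff_le measure_nonneg order_trans)
next
  case False
  note X = assms(1,2) and mu = assms(3,4) and Bpos = assms(5) and bh = assms(6) and LH = assms(7)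
    and cs = assms(8) and dpos = assms(9)
  have d1: "\<delta> < 1" using False by simp
  define TS where "TS = train_sets X m"
  define \<Phi> where "\<Phi> = (\<lambda>S. test_err y X S (L S) - train_err y S (L S))"
  define C where "C = 2 * \<beta> + B^2 * (real m + real u) / (real m * real u)"
  define \<epsilon> where "\<epsilon> = C * sqrt (alpha m u * ln (1 / \<delta>) / 2)"
  define E where "E = {S. test_err y X S (L S) \<le> train_err y S (L S) + \<beta> + \<epsilon>}"
  have finTS: "finite TS" unfolding TS_def using X by (simp add: TS_finite)
  have TSne: "TS \<noteq> {}" unfolding TS_def using X by (intro TS_nonempty) auto
  have cT: "real (card TS) > 0" using finTS TSne by (simp add: card_gt_0_iff)
  have inTS: "S \<subseteq> X" "finite S" "card S = m" if "S \<in> TS" for S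
    using that X by (auto simp: TS_def train_sets_def intro: finite_subset)
  have cXS: "card (X - S) = u" if ST: "S \<in> TS" for S
  proof -
    have "card (X - S) = card X - card S" using inTS[OF ST] by (intro card_Diff_subset) auto
    thus ?thesis using inTS[OF ST] X by simp
  qed
  have stab: "\<bar>cost y (L S') z - cost y (L S) z\<bar> \<le> \<beta>" if "S \<in> TS" "differ_one X S S'" "z \<in> X" for S S' z
    using cs that unfolding cost_stable_def TS_def by blast
  have costb: "0 \<le> cost y (L S) z \<and> cost y (L S) z \<le> B^2" if "S \<in> TS" "z \<in> X" for S z
  proof -
    have "\<bar>L S z - y z\<bar> \<le> B" using bh LH[of S] that unfolding bounded_hyp_def TS_def by blast
    hence "\<bar>L S z - y z\<bar>^2 \<le> B^2" by (intro power_mono) auto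
    thus ?thesis unfolding cost_def by simp
  qed
  have beta0: "\<beta> \<ge> 0"
  proof -
    obtain S0 where S0: "S0 \<subseteq> X" "card S0 = m" "finite S0"
      using obtain_subset_with_card_n[of m X] X by auto
    have S0T: "S0 \<in> TS" using S0 by (simp add: TS_def train_sets_def)
    obtain x where x: "x \<in> S0" using S0 mu by (metis all_not_in_conv card.empty not_one_le_zero)
    have "card (X - S0) = u" using cXS S0T by simp
    then obtain x' where x': "x' \<in> X - S0" using mu by (metis all_not_in_conv card.empty not_one_le_zero)
    have "differ_one X S0 (S0 - {x} \<union> {x'})" unfolding differ_one_def using x x' by blast
    from stab[OF S0T this, of x] x S0 show ?thesis by auto
  qed
  have Cpos: "C > 0" unfolding C_def using beta0 Bpos mu by (intro add_nonneg_pos) auto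
  have Ceq: "C = 2 * \<beta> + B^2 / real m + B^2 / real u" unfolding C_def using mu by (simp add: field_simps)
  have bd: "bd_diff X m \<Phi> C"
    unfolding bd_diff_def
  proof (intro ballI allI impI)
    fix S S' assume S: "S \<in> train_sets X m" and d: "differ_one X S S'"
    have ST: "S \<in> TS" using S by (simp add: TS_def)
    then obtain x x' where xx: "x \<in> S" "x' \<in> X - S" "S' = S - {x} \<union> {x'}"
      using d unfolding differ_one_def by blast
    define A1 where "A1 = S - {x}"
    have fA1: "finite A1" using inTS[OF ST] by (simp add: A1_def)
    have SA1: "S = insert x A1" "S' = insert x' A1" using xx by (auto simp: A1_def)
    have nA1: "x \<notin> A1" "x' \<notin> A1" using xx by (auto simp: A1_def)
    have cA1: "Suc (card A1) = m" using inTS[OF ST] fA1 nA1 SA1 by simp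
    have cS': "card S' = m" using SA1 fA1 nA1 cA1 by simp
    have S'T: "S' \<in> TS" using cS' xx inTS[OF ST] by (auto simp: TS_def train_sets_def)
    have xX: "x \<in> X" using xx inTS[OF ST] by auto
    have tr: "\<bar>train_err y S' (L S') - train_err y S (L S)\<bar> \<le> \<beta> + B^2 / real m"
    proof -
      have "\<bar>sum (cost y (L S')) (insert x' A1) / real (Suc (card A1)) - sum (cost y (L S)) (insert x A1) / real (Suc (card A1))\<bar>
            \<le> \<beta> + B^2 / real (Suc (card A1))"
      proof (rule swap_avg[OF fA1 nA1(2) nA1(1) _ beta0])
        show "\<bar>cost y (L S') z - cost y (L S) z\<bar> \<le> \<beta>" if "z \<in> A1" for z
          using stab[OF ST d] that inTS[OF ST] by (auto simp: A1_def)
      qed (use costb[OF S'T] costb[OF ST] xx xX in auto)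
      thus ?thesis unfolding train_err_def using cS' inTS(3)[OF ST] SA1 cA1 by simp
    qed
    define A2 where "A2 = X - S - {x'}"
    have fA2: "finite A2" using X by (simp add: A2_def)
    have XA2: "X - S = insert x' A2" "X - S' = insert x A2" using xx xX by (auto simp: A2_def)
    have nA2: "x \<notin> A2" "x' \<notin> A2" using xx by (auto simp: A2_def)
    have cA2: "Suc (card A2) = u" using cXS[OF ST] XA2 fA2 nA2 by simp
    have cXS': "card (X - S') = u" using cXS[OF S'T] .
    have te: "\<bar>test_err y X S' (L S') - test_err y X S (L S)\<bar> \<le> \<beta> + B^2 / real u"
    proof -
      have "\<bar>sum (cost y (L S')) (insert x A2) / real (Suc (card A2)) - sum (cost y (L S)) (insert x' A2) / real (Suc (card A2))\<bar>
            \<le> \<beta> + B^2 / real (Suc (card A2))"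
      proof (rule swap_avg[OF fA2 nA2(1) nA2(2) _ beta0])
        show "\<bar>cost y (L S') z - cost y (L S) z\<bar> \<le> \<beta>" if "z \<in> A2" for z
          using stab[OF ST d] that by (auto simp: A2_def)
      qed (use costb[OF S'T] costb[OF ST] xx xX in auto)
      thus ?thesis unfolding test_err_def using cXS' cXS[OF ST] XA2 cA2 by simp
    qed
    show "\<bar>\<Phi> S' - \<Phi> S\<bar> \<le> C" unfolding \<Phi>_def Ceq using tr te by linarith
  qed
  have muB: "avg TS \<Phi> \<le> \<beta>"
  proof -
    have "avg TS (\<lambda>S. (\<Sum>z\<in>X - S. cost y (L S) z) / real u - (\<Sum>z\<in>S. cost y (L S) z) / real m) \<le> \<beta>"
      unfolding TS_def
    proof (rule expect_bound[OF X mu])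
      fix S x0 x z assume h: "S \<in> train_sets X m" "x0 \<in> S" "x \<in> X - S" "z \<in> X"
      have "differ_one X S (insert x (S - {x0}))" unfolding differ_one_def using h by blast
      from stab[OF _ this h(4)] h(1) show "cost y (L S) z \<le> cost y (L (insert x (S - {x0}))) z + \<beta>"
        by (auto simp: TS_def)
    qed
    moreover have "avg TS \<Phi> = avg TS (\<lambda>S. (\<Sum>z\<in>X - S. cost y (L S) z) / real u - (\<Sum>z\<in>S. cost y (L S) z) / real m)"
      unfolding avg_def \<Phi>_def test_err_def train_err_def
      by (intro arg_cong2[where f="(/)"] sum.cong refl) (simp add: cXS inTS)
    ultimately show ?thesis by simp
  qed
  have lnpos: "ln (1 / \<delta>) > 0" using dpos d1 by simp
  have apos: "alpha m u > 0"
  proof -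
    have "real (max m u) \<ge> 1" using mu by simp
    hence "1 - 1 / (2 * real (max m u)) > 0" by (simp add: field_simps)
    moreover have "real m * real u / (real m + real u - 1/2) > 0" using mu by simp
    ultimately show ?thesis unfolding alpha_def by (intro mult_pos_pos) auto
  qed
  have epos: "\<epsilon> > 0" unfolding \<epsilon>_def using Cpos apos lnpos by simp
  have expeq: "exp (- 2 * \<epsilon>^2 / (C^2 * alpha m u)) = \<delta>"
  proof -
    have "\<epsilon>^2 = C^2 * (alpha m u * ln (1 / \<delta>) / 2)"
      unfolding \<epsilon>_def using apos lnpos by (simp add: power_mult_distrib)
    hence "- 2 * \<epsilon>^2 / (C^2 * alpha m u) = - ln (1 / \<delta>)" using Cpos apos by (simp add: field_simps)
    also have "\<dots> = ln \<delta>" using dpos by (simp add: ln_div)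
    finally show ?thesis using dpos by simp
  qed
  define Bad where "Bad = {S\<in>TS. \<Phi> S - avg TS \<Phi> \<ge> \<epsilon>}"
  have badle: "real (card Bad) \<le> \<delta> * real (card TS)"
  proof (cases "m \<le> u")
    case True
    have "real (card Bad) \<le> exp (- 2 * \<epsilon>^2 / (C^2 * (real m * (real (m + u - m))^2 / ((real (m + u - m) - 1/2) * (real (m + u) - 1/2)))))
           * real (card TS)"
      unfolding Bad_def TS_def by (rule tail_gen[OF X(1) X(2) mu(1) _ bd Cpos epos]) (use mu in auto)
    also have "(real m * (real (m + u - m))^2 / ((real (m + u - m) - 1/2) * (real (m + u) - 1/2))) = alpha m u"
      using alpha_eq1[OF True mu(1)] by simp
    finally show ?thesis using expeq by simp
  next
    case False
    define \<Psi> where "\<Psi> = (\<lambda>T. \<Phi> (X - T))"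
    have bij: "bij_betw (\<lambda>T. X - T) (train_sets X u) TS" unfolding TS_def by (rule compl_bij[OF X])
    have bdP: "bd_diff X u \<Psi> C"
      unfolding bd_diff_def
    proof (intro ballI allI impI)
      fix T T' assume T: "T \<in> train_sets X u" and d: "differ_one X T T'"
      then obtain x x' where xx: "x \<in> T" "x' \<in> X - T" "T' = T - {x} \<union> {x'}"
        unfolding differ_one_def by blast
      have TX: "T \<subseteq> X" using T by (simp add: train_sets_def)
      have "differ_one X (X - T) (X - T')"
        unfolding differ_one_def using xx TX by (intro exI[of _ x'] exI[of _ x]) auto
      moreover have "X - T \<in> train_sets X m" using bij T unfolding TS_def by (auto simp: bij_betw_def)
      ultimately show "\<bar>\<Psi> T' - \<Psi> T\<bar> \<le> C" using bd unfolding bd_diff_def \<Psi>_def by blast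
    qed
    have cardeq: "card (train_sets X u) = card TS" using bij by (rule bij_betw_same_card)
    have avgeq: "avg (train_sets X u) \<Psi> = avg TS \<Phi>"
      unfolding avg_def \<Psi>_def cardeq using sum.reindex_bij_betw[OF bij, of \<Phi>] by simp
    have badeq: "card Bad = card {T\<in>train_sets X u. \<Psi> T - avg (train_sets X u) \<Psi> \<ge> \<epsilon>}"
    proof -
      have "Bad = (\<lambda>T. X - T) ` {T\<in>train_sets X u. \<Psi> T - avg (train_sets X u) \<Psi> \<ge> \<epsilon>}"
      proof
        show "Bad \<subseteq> (\<lambda>T. X - T) ` {T\<in>train_sets X u. \<Psi> T - avg (train_sets X u) \<Psi> \<ge> \<epsilon>}"
        proof
          fix S assume S: "S \<in> Bad"
          hence ST: "S \<in> TS" by (simp add: Bad_def)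
          have "X - S \<in> train_sets X u" using cXS[OF ST] by (auto simp: train_sets_def)
          moreover have "X - (X - S) = S" using inTS(1)[OF ST] by auto
          ultimately show "S \<in> (\<lambda>T. X - T) ` {T\<in>train_sets X u. \<Psi> T - avg (train_sets X u) \<Psi> \<ge> \<epsilon>}"
            using S by (auto simp: Bad_def \<Psi>_def avgeq[unfolded \<Psi>_def] intro!: image_eqI[of _ _ "X - S"])
        qed
        show "(\<lambda>T. X - T) ` {T\<in>train_sets X u. \<Psi> T - avg (train_sets X u) \<Psi> \<ge> \<epsilon>} \<subseteq> Bad"
          using bij by (auto simp: Bad_def \<Psi>_def avgeq[unfolded \<Psi>_def] bij_betw_def)
      qed
      moreover have "inj_on (\<lambda>T. X - T) {T\<in>train_sets X u. \<Psi> T - avg (train_sets X u) \<Psi> \<ge> \<epsilon>}"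
        using bij by (auto simp: bij_betw_def intro: inj_on_subset)
      ultimately show ?thesis by (simp add: card_image)
    qed
    have "real (card Bad) \<le> exp (- 2 * \<epsilon>^2 / (C^2 * (real u * (real (u + m - u))^2 / ((real (u + m - u) - 1/2) * (real (u + m) - 1/2)))))
           * real (card (train_sets X u))"
      unfolding badeq by (rule tail_gen[OF X(1) _ mu(2) _ bdP Cpos epos]) (use X False in auto)
    also have "(real u * (real (u + m - u))^2 / ((real (u + m - u) - 1/2) * (real (u + m) - 1/2))) = alpha m u"
      using alpha_eq2[of u m] False mu by simp
    finally show ?thesis using expeq cardeq by simp
  qed
  have sub: "TS - Bad \<subseteq> TS \<inter> E"
  proof
    fix S assume S: "S \<in> TS - Bad"
    hence "\<Phi> S - avg TS \<Phi> < \<epsilon>" by (auto simp: Bad_def)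
    with muB have "\<Phi> S \<le> \<beta> + \<epsilon>" by linarith
    thus "S \<in> TS \<inter> E" using S unfolding E_def \<Phi>_def by auto
  qed
  have "real (card TS) - real (card Bad) = real (card (TS - Bad))"
    using finTS by (simp add: Bad_def card_Diff_subset of_nat_diff card_mono)
  also have "\<dots> \<le> real (card (TS \<inter> E))" using sub finTS by (intro of_nat_mono card_mono) auto
  finally have "real (card (TS \<inter> E)) \<ge> (1 - \<delta>) * real (card TS)" using badle by (simp add: algebra_simps)
  hence "real (card (TS \<inter> E)) / real (card TS) \<ge> 1 - \<delta>" using cT by (simp add: le_divide_eq)
  moreover have "measure_pmf.prob (pmf_of_set TS) E = real (card (TS \<inter> E)) / real (card TS)"
    by (rule measure_pmf_of_set[OF TSne finTS])
  ultimately show ?thesis unfolding TS_def E_def \<epsilon>_def C_def by simp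
qed


end
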